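(* Let $\mathbf{u}=(u_1,u_2)\in\mathbb{R}[x_1,x_2]_d^2$ and $p\in\Sigma[x_1,x_2]_{2d}$, and suppose $\nabla f_p(\mathbf{u})=0$ and $\nabla^2 f_p(\mathbf{u})\succeq 0$. If $$p\in\operatorname{im}(\mathcal{A}_{\mathbf{u}})+\operatorname{cone}\big(\sigma(\ker(\mathcal{A}_{\mathbf{u}}))\big),$$ then $f_p(\mathbf{u})=0$.
   Context: $\mathbb{R}[x_1,x_2]_n$ denotes the space of real binary forms of degree $n$, and $\Sigma[x_1,x_2]_{2d}$ the cone of sums of squares of binary forms of degree $d$. $\mathcal{A}_{\mathbf{u}}:\mathbb{R}[x_1,x_2]_d^2\to\mathbb{R}[x_1,x_2]_{2d}$ is the linear map $(v_1,v_2)\mapsto u_1v_1+u_2v_2$, and $\sigma:\mathbb{R}[x_1,x_2]_d^2\to\mathbb{R}[x_1,x_2]_{2d}$ is $(v_1,v_2)\mapsto v_1^2+v_2^2$; $\operatorname{cone}(S)$ is the convex cone generated by $S$ (nonnegative combinations). Fix any inner product $\langle\cdot,\cdot\rangle$ on $\mathbb{R}[x_1,x_2]_{2d}$ with norm $\|\cdot\|$ and let $f_p(\mathbf{u})=\|\sigma(\mathbf{u})-p\|^2$. Derivatives are with respect to the vector space $\mathbb{R}[x_1,x_2]_d^2$: $\nabla f_p(\mathbf{u})=0$ means $\langle\mathcal{A}_{\mathbf{u}}(\mathbf{v}),\sigma(\mathbf{u})-p\rangle=0$ for all $\mathbf{v}$, and $\nabla^2 f_p(\mathbf{u})\succeq0$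 means $\langle\sigma(\mathbf{v}),\sigma(\mathbf{u})-p\rangle+2\|\mathcal{A}_{\mathbf{u}}(\mathbf{v})\|^2\ge0$ for all $\mathbf{v}\in\mathbb{R}[x_1,x_2]_d^2$. *)

theory Defs
  imports "HOL-Computational_Algebra.Polynomial"
begin

text \<open>Binary forms of degree n are encoded by their dehomogenisation:
  the form \<Sum> c_i x1^i x2^(n-i) corresponds to the univariate polynomial
  \<Sum> c_i x^i of degree at most n.  This is a linear bijection which is
  compatible with multiplication (forms of degree a times forms of degree b
  give forms of degree a+b).\<close>

definition forms :: "nat \<Rightarrow> real poly set" where
  "forms n = {q. degree q \<le> n}"

definition sos_forms :: "nat \<Rightarrow> real poly set" where
  "sos_forms d = {p. \<exists>qs. set qs \<subseteq> forms d \<and> p = sum_list (map (\<lambda>q. q ^ 2) qs)}"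

definition A_map :: "real poly \<times> real poly \<Rightarrow> real poly \<times> real poly \<Rightarrow> real poly" where
  "A_map u v = fst u * fst v + snd u * snd v"

definition sigma :: "real poly \<times> real poly \<Rightarrow> real poly" where
  "sigma v = (fst v)\<^sup>2 + (snd v)\<^sup>2"

definition pairs :: "nat \<Rightarrow> (real poly \<times> real poly) set" where
  "pairs d = forms d \<times> forms d"

definition ker_A :: "nat \<Rightarrow> real poly \<times> real poly \<Rightarrow> (real poly \<times> real poly) set" where
  "ker_A d u = {v \<in> pairs d. A_map u v = 0}"

definition im_A :: "nat \<Rightarrow> real poly \<times> real poly \<Rightarrow> real poly set" where
  "im_A d u = A_map u ` pairs d"

definition cone_gen :: "real poly set \<Rightarrow> real poly set" where
  "cone_gen S = {x. \<exists>F c. finite F \<and> F \<subseteq> S \<and> (\<forall>y\<in>F. c y \<ge> 0) \<and>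
                          x = (\<Sum>y\<in>F. smult (c y) y)}"

definition inner_product_on :: "real poly set \<Rightarrow> (real poly \<Rightarrow> real poly \<Rightarrow> real) \<Rightarrow> bool" where
  "inner_product_on V ip \<longleftrightarrow>
     (\<forall>x\<in>V. \<forall>y\<in>V. ip x y = ip y x) \<and>
     (\<forall>x\<in>V. \<forall>y\<in>V. \<forall>z\<in>V. ip (x + y) z = ip x z + ip y z) \<and>
     (\<forall>a. \<forall>x\<in>V. \<forall>y\<in>V. ip (smult a x) y = a * ip x y) \<and>
     (\<forall>x\<in>V. x \<noteq> 0 \<longrightarrow> ip x x > 0)"

definition f_obj :: "(real poly \<Rightarrow> real poly \<Rightarrow> real) \<Rightarrow> real poly \<Rightarrow> real poly \<times> real poly \<Rightarrow> real" where
  "f_obj ip p u = ip (sigma u - p) (sigma u - p)"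

definition grad_zero :: "nat \<Rightarrow> (real poly \<Rightarrow> real poly \<Rightarrow> real) \<Rightarrow> real poly \<Rightarrow> real poly \<times> real poly \<Rightarrow> bool" where
  "grad_zero d ip p u \<longleftrightarrow> (\<forall>v\<in>pairs d. ip (A_map u v) (sigma u - p) = 0)"

definition hess_psd :: "nat \<Rightarrow> (real poly \<Rightarrow> real poly \<Rightarrow> real) \<Rightarrow> real poly \<Rightarrow> real poly \<times> real poly \<Rightarrow> bool" where
  "hess_psd d ip p u \<longleftrightarrow>
     (\<forall>v\<in>pairs d. ip (sigma v) (sigma u - p) + 2 * ip (A_map u v) (A_map u v) \<ge> 0)"

end

theory Submission
  imports Defs
begin

lemma forms_add: "a \<in> forms n \<Longrightarrow> b \<in> forms n \<Longrightarrow> a + b \<in> forms n"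
  unfolding forms_def using degree_add_le by auto

lemma forms_diff: "a \<in> forms n \<Longrightarrow> b \<in> forms n \<Longrightarrow> a - b \<in> forms n"
  unfolding forms_def using degree_diff_le by auto

lemma forms_smult: "a \<in> forms n \<Longrightarrow> smult c a \<in> forms n"
  unfolding forms_def using degree_smult_le le_trans by blast

lemma forms_zero: "0 \<in> forms n"
  unfolding forms_def by auto

lemma forms_mult: "a \<in> forms d \<Longrightarrow> b \<in> forms d \<Longrightarrow> a * b \<in> forms (2*d)"
  unfolding forms_def using degree_mult_le[of a b] by auto

lemma forms_sum: "finite F \<Longrightarrow> F \<subseteq> forms n \<Longrightarrow> (\<Sum>y\<in>F. smult (c y) y) \<in> forms n"
  by (induction F rule: finite_induct) (auto intro: forms_add forms_smult forms_zero)

lemma A_map_forms: "u \<in> pairs d \<Longrightarrow> v \<in> pairs d \<Longrightarrow> A_map u v \<in> forms (2*d)"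
  unfolding A_map_def pairs_def by (auto intro!: forms_add forms_mult)

lemma sigma_forms: "v \<in> pairs d \<Longrightarrow> sigma v \<in> forms (2*d)"
  unfolding sigma_def pairs_def power2_eq_square by (auto intro!: forms_add forms_mult)

lemma sigma_A: "sigma u = A_map u u"
  unfolding sigma_def A_map_def power2_eq_square by simp

lemma ip_diff:
  assumes "inner_product_on V ip" "x \<in> V" "y \<in> V" "z \<in> V" "x - y \<in> V"
  shows "ip (x - y) z = ip x z - ip y z"
proof -
  have "ip ((x - y) + y) z = ip (x - y) z + ip y z"
    using assms unfolding inner_product_on_def by blast
  then show ?thesis by simp
qed

lemma ip_add:
  assumes "inner_product_on V ip" "x \<in> V" "y \<in> V" "z \<in> V"
  shows "ip (x + y) z = ip x z + ip y z"
  using assms unfolding inner_product_on_def by blast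

lemma ip_smult:
  assumes "inner_product_on V ip" "x \<in> V" "z \<in> V"
  shows "ip (smult a x) z = a * ip x z"
  using assms unfolding inner_product_on_def by blast

lemma ip_sum:
  assumes "inner_product_on (forms n) ip" "finite F" "F \<subseteq> forms n" "z \<in> forms n"
  shows "ip (\<Sum>y\<in>F. smult (c y) y) z = (\<Sum>y\<in>F. c y * ip y z)"
  using assms(2,3)
proof (induction F rule: finite_induct)
  case empty
  have "ip (smult 0 0) z = 0 * ip 0 z" using ip_smult[OF assms(1) forms_zero assms(4)] .
  then show ?case by simp
next
  case (insert x F)
  have "ip (\<Sum>y\<in>insert x F. smult (c y) y) z = ip (smult (c x) x + (\<Sum>y\<in>F. smult (c y) y)) z"
    using insert by simp
  also have "\<dots> = ip (smult (c x) x) z + ip (\<Sum>y\<in>F. smult (c y) y) z"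
    using insert by (intro ip_add[OF assms(1)] forms_smult forms_sum assms(4)) auto
  also have "\<dots> = c x * ip x z + (\<Sum>y\<in>F. c y * ip y z)"
    using insert ip_smult[OF assms(1) _ assms(4)] by auto
  finally show ?case using insert by simp
qed

lemma ip_nonneg:
  assumes "inner_product_on V ip" "x \<in> V" "0 \<in> V"
  shows "ip x x \<ge> 0"
proof (cases "x = 0")
  case True
  have "ip (smult 0 0) 0 = 0 * ip 0 0" using ip_smult[OF assms(1) assms(3) assms(3)] .
  then show ?thesis using True by simp
next
  case False then show ?thesis using assms unfolding inner_product_on_def by force
qed

theorem proposition4p2:
  fixes d :: nat and ip :: "real poly \<Rightarrow> real poly \<Rightarrow> real"
    and u :: "real poly \<times> real poly" and p :: "real poly"
  assumes "inner_product_on (forms (2 * d)) ip"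
    and "u \<in> pairs d"
    and "p \<in> sos_forms d"
    and "grad_zero d ip p u"
    and "hess_psd d ip p u"
    and "p \<in> {a + b | a b. a \<in> im_A d u \<and> b \<in> cone_gen (sigma ` ker_A d u)}"
  shows "f_obj ip p u = 0"
proof -
  note IP = assms(1)
  obtain a b where p: "p = a + b" and a: "a \<in> im_A d u" and b: "b \<in> cone_gen (sigma ` ker_A d u)"
    using assms(6) by blast
  obtain w where w: "w \<in> pairs d" "a = A_map u w" using a unfolding im_A_def by blast
  obtain F c where F: "finite F" "F \<subseteq> sigma ` ker_A d u" "\<forall>y\<in>F. c y \<ge> 0"
    and bF: "b = (\<Sum>y\<in>F. smult (c y) y)"
    using b unfolding cone_gen_def by blast
  have Fforms: "F \<subseteq> forms (2*d)"
    using F(2) sigma_forms unfolding ker_A_def by blast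
  have aV: "a \<in> forms (2*d)" using w A_map_forms assms(2) by simp
  have bV: "b \<in> forms (2*d)" using bF forms_sum F(1) Fforms by simp
  have pV: "p \<in> forms (2*d)" using p aV bV forms_add by simp
  have sV: "sigma u \<in> forms (2*d)" using sigma_forms assms(2) by simp
  define r where "r = sigma u - p"
  have rV: "r \<in> forms (2*d)" unfolding r_def using forms_diff sV pV by simp
  have g: "ip (A_map u v) r = 0" if "v \<in> pairs d" for v
    using assms(4) that unfolding grad_zero_def r_def by blast
  have su: "ip (sigma u) r = 0" using g[OF assms(2)] sigma_A by simp
  have ar: "ip a r = 0" using g[OF w(1)] w(2) by simp
  have kpos: "ip y r \<ge> 0" if yF: "y \<in> F" for y
  proof -
    obtain k where k: "k \<in> ker_A d u" "y = sigma k" using F(2) yF by blast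
    have "k \<in> pairs d" "A_map u k = 0" using k unfolding ker_A_def by auto
    then have "ip (sigma k) r + 2 * ip 0 0 \<ge> 0"
      using assms(5) unfolding hess_psd_def r_def by metis
    moreover have "ip (smult 0 0) 0 = 0 * ip 0 0" using ip_smult[OF IP forms_zero forms_zero] .
    ultimately show ?thesis using k by simp
  qed
  have br: "ip b r \<ge> 0"
    unfolding bF using ip_sum[OF IP F(1) Fforms rV] F(3) kpos
    by (simp add: sum_nonneg)
  have pr: "ip p r = ip a r + ip b r" using p ip_add[OF IP aV bV rV] by simp
  have "ip r r = ip (sigma u) r - ip p r"
    unfolding r_def using ip_diff[OF IP sV pV _ forms_diff[OF sV pV]] rV r_def by simp
  then have "ip r r \<le> 0" using su ar br pr by simp
  moreover have "ip r r \<ge> 0" using ip_nonneg[OF IP rV forms_zero] .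
  ultimately show ?thesis unfolding f_obj_def r_def by simp
qed

end
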